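(* For all integers $n\ge1$ and $1\le q\le 2^{n-1}$, we have $\overline{\xi_f}(E_{2^n/q})=\dfrac{2^n}{q}$.
   Context: For $p,k\in\mathbb{N}$ with $p/k\ge2$, the fraction graph $E_{p/k}$ has vertex set $\mathbb{Z}_p$, and distinct vertices $i,j$ are adjacent iff their cyclic distance $\min(|i-j|,p-|i-j|)$ is strictly less than $k$; here $p=2^n$, $k=q$. For a graph $G$, $\overline{\xi_f}(G)$ (complement of the projective rank) is the infimum of $d/r$ over all $d,r\in\mathbb{N}$ for which there is an assignment of $r$-dimensional subspaces $W_v\le\mathbb{C}^d$ to the vertices of $G$ such that distinct non-adjacent vertices receive orthogonal subspaces. *)

theory Defs
  imports Complex_Main
begin

text \<open>Complex coordinate space C^d, realised as functions nat \<Rightarrow> complex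
  vanishing outside the index set {..<d}.\<close>
definition cvec :: "nat \<Rightarrow> (nat \<Rightarrow> complex) set" where
  "cvec d = {x. \<forall>i\<ge>d. x i = 0}"

definition cinner :: "nat \<Rightarrow> (nat \<Rightarrow> complex) \<Rightarrow> (nat \<Rightarrow> complex) \<Rightarrow> complex" where
  "cinner d x y = (\<Sum>i<d. x i * cnj (y i))"

definition cspan :: "(nat \<Rightarrow> complex) set \<Rightarrow> (nat \<Rightarrow> complex) set" where
  "cspan B = {x. \<exists>c :: (nat \<Rightarrow> complex) \<Rightarrow> complex. x = (\<lambda>i. \<Sum>b\<in>B. c b * b i)}"

definition cindep :: "(nat \<Rightarrow> complex) set \<Rightarrow> bool" where
  "cindep B = (\<forall>c :: (nat \<Rightarrow> complex) \<Rightarrow> complex.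
      (\<forall>i. (\<Sum>b\<in>B. c b * b i) = 0) \<longrightarrow> (\<forall>b\<in>B. c b = 0))"

definition csubspace_dim :: "nat \<Rightarrow> nat \<Rightarrow> (nat \<Rightarrow> complex) set \<Rightarrow> bool" where
  "csubspace_dim d r W = (W \<subseteq> cvec d \<and>
     (\<exists>B. finite B \<and> card B = r \<and> B \<subseteq> W \<and> cindep B \<and> cspan B = W))"

definition corth :: "nat \<Rightarrow> (nat \<Rightarrow> complex) set \<Rightarrow> (nat \<Rightarrow> complex) set \<Rightarrow> bool" where
  "corth d U W = (\<forall>x\<in>U. \<forall>y\<in>W. cinner d x y = 0)"

text \<open>Complement of the projective rank of a graph with vertex set V and adjacency E:
  infimum of d/r over all assignments of r-dimensional subspaces of C^d (r \<ge> 1)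
  such that distinct non-adjacent vertices receive orthogonal subspaces.\<close>
definition xi_f_bar :: "'a set \<Rightarrow> ('a \<Rightarrow> 'a \<Rightarrow> bool) \<Rightarrow> real" where
  "xi_f_bar V E = Inf {real d / real r | d r. r \<ge> 1 \<and>
      (\<exists>W :: 'a \<Rightarrow> (nat \<Rightarrow> complex) set.
         (\<forall>v\<in>V. csubspace_dim d r (W v)) \<and>
         (\<forall>u\<in>V. \<forall>v\<in>V. u \<noteq> v \<and> \<not> E u v \<longrightarrow> corth d (W u) (W v)))}"

text \<open>Fraction graph E_{p/k}: vertices Z_p = {0..<p}, distinct i, j adjacent iff
  their cyclic distance is strictly less than k.\<close>
definition cycdist :: "nat \<Rightarrow> nat \<Rightarrow> nat \<Rightarrow> nat" where
  "cycdist p i j = (let a = (if i \<le> j then j - i else i - j) in min a (p - a))"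

definition frac_adj :: "nat \<Rightarrow> nat \<Rightarrow> nat \<Rightarrow> nat \<Rightarrow> bool" where
  "frac_adj p k i j = (i \<noteq> j \<and> cycdist p i j < k)"

end

theory Submission imports Defs "HOL-Library.Function_Algebras" begin

definition cscale :: "complex \<Rightarrow> (nat \<Rightarrow> complex) \<Rightarrow> nat \<Rightarrow> complex" where
  "cscale c x = (\<lambda>i. c * x i)"

interpretation cv: vector_space cscale
  by unfold_locales (auto simp: cscale_def fun_eq_iff algebra_simps)

definition sumsp :: "(nat \<Rightarrow> complex) set \<Rightarrow> (nat \<Rightarrow> complex) set \<Rightarrow> (nat \<Rightarrow> complex) set" where
  "sumsp S T = {x + y |x y. x \<in> S \<and> y \<in> T}"

lemma sum_app: "(\<Sum>x\<in>A. f x) i = (\<Sum>x\<in>A. f x i)" for f :: "'a \<Rightarrow> nat \<Rightarrow> complex"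
  by (induction A rule: infinite_finite_induct) auto

lemma sum_cscale: "(\<Sum>v\<in>B. cscale (u v) v) = (\<lambda>i. \<Sum>v\<in>B. u v * v i)"
  by (rule ext) (simp add: sum_app cscale_def)

lemma cspan_eq: "finite B \<Longrightarrow> cspan B = cv.span B"
  unfolding cspan_def cv.span_finite sum_cscale by auto

lemma cindep_eq: "finite B \<Longrightarrow> cindep B = cv.independent B"
  unfolding cindep_def cv.dependent_finite sum_cscale by (auto simp: fun_eq_iff)

lemma card_le_dim_gen:
  assumes F: "finite F" and VF: "V \<subseteq> cv.span F" and BV: "B \<subseteq> V" and iB: "cv.independent B"
  shows "card B \<le> cv.dim V"
proof -
  obtain B' where B': "B' \<subseteq> V" "cv.independent B'" "V \<subseteq> cv.span B'" "card B' = cv.dim V"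
    using cv.basis_exists by metis
  have fB': "finite B'" using cv.independent_span_bound[OF F B'(2)] B'(1) VF by blast
  have "card B \<le> card B'" using cv.independent_span_bound[OF fB' iB] BV B'(3) by blast
  then show ?thesis using B'(4) by simp
qed

lemma sumsp_span: "S \<subseteq> cv.span F \<Longrightarrow> T \<subseteq> cv.span F \<Longrightarrow> sumsp S T \<subseteq> cv.span F"
  unfolding sumsp_def using cv.span_add by blast

lemma sumsp_subspace: "cv.subspace S \<Longrightarrow> cv.subspace T \<Longrightarrow> cv.subspace (sumsp S T)"
  unfolding sumsp_def by (rule cv.subspace_sums)

lemma grassmann:
  assumes S: "cv.subspace S" and T: "cv.subspace T" and F: "finite F"
    and SF: "S \<subseteq> cv.span F" and TF: "T \<subseteq> cv.span F"
  shows "cv.dim S + cv.dim T \<le> cv.dim (sumsp S T) + cv.dim (S \<inter> T)"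
proof -
  obtain B where B: "B \<subseteq> S \<inter> T" "cv.independent B" "S \<inter> T \<subseteq> cv.span B" "card B = cv.dim (S \<inter> T)"
    using cv.basis_exists by metis
  obtain C where C: "B \<subseteq> C" "C \<subseteq> S" "cv.independent C" "S \<subseteq> cv.span C"
    using cv.maximal_independent_subset_extend[of B S] B by blast
  obtain D where D: "B \<subseteq> D" "D \<subseteq> T" "cv.independent D" "T \<subseteq> cv.span D"
    using cv.maximal_independent_subset_extend[of B T] B by blast
  have fC: "finite C" using cv.independent_span_bound[OF F C(3)] C(2) SF by blast
  have fD: "finite D" using cv.independent_span_bound[OF F D(3)] D(2) TF by blast
  have fB: "finite B" using C(1) fC finite_subset by blast
  have cC: "card C = cv.dim S" using cv.basis_card_eq_dim[OF C(2) C(4) C(3)] .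
  have cD: "card D = cv.dim T" using cv.basis_card_eq_dim[OF D(2) D(4) D(3)] .
  have CD: "C \<inter> D = B"
  proof
    show "B \<subseteq> C \<inter> D" using C D by auto
    show "C \<inter> D \<subseteq> B"
    proof
      fix x assume x: "x \<in> C \<inter> D"
      show "x \<in> B"
      proof (rule ccontr)
        assume "x \<notin> B"
        then have "B \<subseteq> C - {x}" using C by auto
        moreover have "x \<in> cv.span B" using x C(2) D(2) B(3) by auto
        ultimately have "x \<in> cv.span (C - {x})" using cv.span_mono by blast
        then have "cv.dependent C" using x unfolding cv.dependent_def by auto
        then show False using C(3) by simp
      qed
    qed
  qed
  have indCD: "cv.independent (C \<union> D)"
  proof -
    have "\<not> (\<exists>u. (\<exists>v\<in>C \<union> D. u v \<noteq> 0) \<and> (\<Sum>v\<in>C \<union> D. cscale (u v) v) = 0)"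
    proof
      assume "\<exists>u. (\<exists>v\<in>C \<union> D. u v \<noteq> 0) \<and> (\<Sum>v\<in>C \<union> D. cscale (u v) v) = 0"
      then obtain u w where w: "w \<in> C \<union> D" "u w \<noteq> 0"
        and s0: "(\<Sum>v\<in>C \<union> D. cscale (u v) v) = 0" by blast
      define y where "y = (\<Sum>v\<in>D - C. cscale (u v) v)"
      have "C \<union> D = C \<union> (D - C)" by blast
      then have split: "(\<Sum>v\<in>C \<union> D. cscale (u v) v) = (\<Sum>v\<in>C. cscale (u v) v) + y"
        unfolding y_def using sum.union_disjoint[of C "D - C"] fC fD by auto
      have yT: "y \<in> T" unfolding y_def
        by (rule cv.subspace_sum[OF T]) (use D cv.subspace_scale[OF T] in auto)
      have sC: "(\<Sum>v\<in>C. cscale (u v) v) \<in> S"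
        by (rule cv.subspace_sum[OF S]) (use C cv.subspace_scale[OF S] in auto)
      have "y = - (\<Sum>v\<in>C. cscale (u v) v)" using s0 split by (simp add: eq_neg_iff_add_eq_0 add.commute)
      then have yS: "y \<in> S" using sC cv.subspace_neg[OF S] by simp
      then have "y \<in> cv.span B" using yT B(3) by auto
      then obtain e where e: "y = (\<Sum>v\<in>B. cscale (e v) v)" using cv.span_finite[OF fB] by auto
      define w' where "w' v = (if v \<in> B then - e v else u v)" for v
      have DBC: "D = B \<union> (D - C)" "B \<inter> (D - C) = {}" using CD C(1) by auto
      have "(\<Sum>v\<in>D. cscale (w' v) v) = (\<Sum>v\<in>B. cscale (w' v) v) + (\<Sum>v\<in>D - C. cscale (w' v) v)"
        using sum.union_disjoint[of B "D - C"] fB fD DBC by auto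
      also have "(\<Sum>v\<in>B. cscale (w' v) v) = (\<Sum>v\<in>B. cscale (- e v) v)"
        by (rule sum.cong) (auto simp: w'_def)
      also have "\<dots> = - (\<Sum>v\<in>B. cscale (e v) v)"
        by (simp add: sum_cscale fun_eq_iff sum_negf)
      also have "(\<Sum>v\<in>D - C. cscale (w' v) v) = y"
        unfolding y_def using C(1) by (intro sum.cong) (auto simp: w'_def)
      finally have "(\<Sum>v\<in>D. cscale (w' v) v) = 0" using e by (simp add: zero_fun_def)
      then have "\<forall>v\<in>D. w' v = 0" using cv.dependent_finite[OF fD] D(3) by auto
      then have u0D: "\<forall>v\<in>D - C. u v = 0" using C(1) unfolding w'_def by (metis DiffE subsetD)
      then have "y = 0" unfolding y_def by (simp add: cscale_def fun_eq_iff)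
      then have "(\<Sum>v\<in>C. cscale (u v) v) = 0" using s0 split by simp
      then have "\<forall>v\<in>C. u v = 0" using cv.dependent_finite[OF fC] C(3) by auto
      then show False using w u0D by auto
    qed
    then show ?thesis using cv.dependent_finite[of "C \<union> D"] fC fD by auto
  qed
  have sub: "C \<union> D \<subseteq> sumsp S T"
  proof
    fix x assume "x \<in> C \<union> D"
    then show "x \<in> sumsp S T"
    proof
      assume "x \<in> C"
      then have "x = x + 0" "x \<in> S" "0 \<in> T" using C cv.subspace_0[OF T] by auto
      then show ?thesis unfolding sumsp_def by blast
    next
      assume "x \<in> D"
      then have "x = 0 + x" "x \<in> T" "0 \<in> S" using D cv.subspace_0[OF S] by auto
      then show ?thesis unfolding sumsp_def by blast
    qed
  qed
  have "card (C \<union> D) \<le> cv.dim (sumsp S T)"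
    by (rule card_le_dim_gen[OF F sumsp_span[OF SF TF] sub indCD])
  moreover have "card (C \<union> D) + card (C \<inter> D) = card C + card D"
    using card_Un_Int[OF fC fD] by simp
  ultimately show ?thesis using cC cD CD B(4) by simp
qed


lemma nx_cases: "v < p \<Longrightarrow> (Suc v < p \<and> Suc v mod p = Suc v) \<or> (Suc v = p \<and> Suc v mod p = 0)"
  by (cases "Suc v = p") auto
lemma cd_ge: "u < p \<Longrightarrow> v < p \<Longrightarrow> (q \<le> cycdist p u v) =
   ((u \<le> v \<and> q + u \<le> v \<and> q + v \<le> p + u) \<or> (v < u \<and> q + v \<le> u \<and> q + u \<le> p + v))"
  unfolding cycdist_def Let_def min_def by auto
lemma cd_A: assumes "u < p" "v < p" "Suc q \<le> cycdist p u v" shows "q \<le> cycdist p u (Suc v mod p)"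
  using nx_cases[OF assms(2)]
proof (elim disjE conjE)
  assume a: "Suc v < p" "Suc v mod p = Suc v"
  show ?thesis using assms a by (auto simp: cd_ge)
next
  assume a: "Suc v = p" "Suc v mod p = 0"
  show ?thesis using assms a by (auto simp: cd_ge)
qed
lemma cd_sym: "cycdist p u v = cycdist p v u"
  by (simp add: cycdist_def Let_def)
lemma cd_shift: assumes "u < p" "v < p" shows "cycdist p (Suc u mod p) (Suc v mod p) = cycdist p u v"
  using nx_cases[OF assms(1)] nx_cases[OF assms(2)]
  by (elim disjE conjE) (auto simp: cycdist_def Let_def)
lemma cd_D: "u < p \<Longrightarrow> v < p \<Longrightarrow> u \<noteq> v \<Longrightarrow> 1 \<le> cycdist p u v"
  by (auto simp: cd_ge)
lemma cd_B: assumes "u < p" "v < p" "2*q \<le> p" "q \<le> Suc (cycdist p u v)" 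
  shows "q \<le> cycdist p u v \<or> q \<le> cycdist p u (Suc v mod p) \<or> q \<le> cycdist p (Suc u mod p) v"
proof (cases "q = 0")
  case True then show ?thesis by simp
next
  case False
  then have h: "q - 1 \<le> cycdist p u v" using assms(4) by simp
  show ?thesis
  using nx_cases[OF assms(1)] nx_cases[OF assms(2)]
  proof (elim disjE conjE)
  qed (use assms h False in \<open>(cases "u \<le> v"; auto simp: cd_ge)+\<close>)
qed
lemma cd_C1: "u < m \<Longrightarrow> v < m \<Longrightarrow> s \<le> cycdist m u v \<Longrightarrow> 2*s \<le> cycdist (2*m) (2*u) (2*v)"
  by (auto simp: cd_ge)
lemma cd_C2: "u < m \<Longrightarrow> v < m \<Longrightarrow> s \<le> cycdist m u v \<Longrightarrow> 2*s \<le> cycdist (2*m) (2*u+1) (2*v+1)"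
  by (auto simp: cd_ge)
lemma mod2: "(x::nat) < 2*p \<Longrightarrow> x mod p = (if x < p then x else x - p)"
  by (simp add: mod_if le_mod_geq)
lemma cd_E: assumes "u < p" "v < p" "j < q" "k < q" "q \<le> p" "(u+j) mod p = (v+k) mod p"
  shows "\<not> q \<le> cycdist p u v"
proof -
  have "u + j < 2*p" "v + k < 2*p" using assms by auto
  then have "u + j = v + k \<or> u + j + p = v + k \<or> u + j = v + k + p"
    using assms(6) unfolding mod2[OF \<open>u + j < 2*p\<close>] mod2[OF \<open>v + k < 2*p\<close>]
    by (auto split: if_splits)
  then show ?thesis using assms by (auto simp: cd_ge)
qed

section \<open>Coordinate space facts\<close>

definition ebasis :: "nat \<Rightarrow> (nat \<Rightarrow> complex) set" where
  "ebasis d = (\<lambda>k i. if i = k then 1 else 0) ` {..<d}"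

lemma cvec_span: "cvec d \<subseteq> cv.span (ebasis d)"
proof
  fix x assume x: "x \<in> cvec d"
  have e: "(\<Sum>k<d. x k * (if i = k then 1 else 0)) = (if i < d then x i else 0)" for i
    by (induction d) (auto simp: less_Suc_eq)
  have "x = (\<Sum>k<d. cscale (x k) (\<lambda>i. if i = k then 1 else 0))"
  proof (rule ext)
    fix i
    have "(\<Sum>k<d. cscale (x k) (\<lambda>i. if i = k then 1 else 0)) i = (\<Sum>k<d. x k * (if i = k then 1 else 0))"
      by (simp add: sum_app cscale_def)
    then show "x i = (\<Sum>k<d. cscale (x k) (\<lambda>i. if i = k then 1 else 0)) i"
      unfolding e using x by (auto simp: cvec_def)
  qed
  also have "\<dots> \<in> cv.span (ebasis d)"
    by (intro cv.span_sum cv.span_scale cv.span_base) (auto simp: ebasis_def)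
  finally show "x \<in> cv.span (ebasis d)" .
qed

lemma fin_ebasis: "finite (ebasis d)"
  by (simp add: ebasis_def)

lemma dim_cvec: "S \<subseteq> cvec d \<Longrightarrow> cv.dim S \<le> d"
proof -
  assume "S \<subseteq> cvec d"
  then have "cv.dim S \<le> card (ebasis d)"
    using cv.dim_le_card[of S "ebasis d"] cvec_span fin_ebasis by blast
  also have "\<dots> \<le> d" unfolding ebasis_def using card_image_le[of "{..<d}"] by simp
  finally show ?thesis .
qed

lemma cinner_add: "cinner d (x + y) z = cinner d x z + cinner d y z"
  by (simp add: cinner_def distrib_right sum.distrib)

lemma cinner_sym: "cinner d y x = cnj (cinner d x y)"
  by (simp add: cinner_def mult.commute)

lemma corth_sym: "corth d S T \<Longrightarrow> corth d T S"
  unfolding corth_def by (metis cinner_sym complex_cnj_zero)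

lemma corth_mono: "corth d S T \<Longrightarrow> S' \<subseteq> S \<Longrightarrow> T' \<subseteq> T \<Longrightarrow> corth d S' T'"
  by (auto simp: corth_def)

lemma corth_sumsp: "corth d S V \<Longrightarrow> corth d T V \<Longrightarrow> corth d (sumsp S T) V"
  by (auto simp: corth_def sumsp_def cinner_add)

lemma corth_sumsp2: "corth d A C \<Longrightarrow> corth d A D \<Longrightarrow> corth d B C \<Longrightarrow> corth d B D \<Longrightarrow>
   corth d (sumsp A B) (sumsp C D)"
  by (intro corth_sumsp corth_sym[OF corth_sumsp]) (auto intro: corth_sym)

lemma cinner_self_zero: assumes "x \<in> cvec d" "cinner d x x = 0" shows "x = 0"
proof -
  have "cinner d x x = (\<Sum>i<d. of_real ((cmod (x i))^2))"
    unfolding cinner_def complex_norm_square by (rule refl)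
  then have "cinner d x x = of_real (\<Sum>i<d. (cmod (x i))^2)"
    by (simp only: of_real_sum)
  then have "(\<Sum>i<d. (cmod (x i))^2) = 0" using assms(2) by (metis of_real_eq_0_iff)
  then have "\<forall>i\<in>{..<d}. (cmod (x i))^2 = 0"
    using sum_nonneg_eq_0_iff[of "{..<d}" "\<lambda>i. (cmod (x i))^2"] by simp
  then have z: "x i = 0" if "i < d" for i using that by simp
  show ?thesis
  proof (rule ext)
    fix i show "x i = 0 i"
      using z[of i] assms(1) by (cases "i < d") (auto simp: cvec_def)
  qed
qed

lemma sumsp_cvec: "S \<subseteq> cvec d \<Longrightarrow> T \<subseteq> cvec d \<Longrightarrow> sumsp S T \<subseteq> cvec d"
  by (auto simp: sumsp_def cvec_def subset_iff)

lemma orth_dim: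
  assumes S: "cv.subspace S" "S \<subseteq> cvec d" and T: "cv.subspace T" "T \<subseteq> cvec d" and o: "corth d S T"
  shows "cv.dim S + cv.dim T \<le> cv.dim (sumsp S T)"
proof -
  have "S \<inter> T \<subseteq> {0}"
  proof
    fix x assume "x \<in> S \<inter> T"
    then have "x \<in> cvec d" "cinner d x x = 0" using S o by (auto simp: corth_def)
    then show "x \<in> {0}" using cinner_self_zero by auto
  qed
  then have "cv.dim (S \<inter> T) \<le> card ({} :: (nat \<Rightarrow> complex) set)"
    by (intro cv.dim_le_card) auto
  then have "cv.dim (S \<inter> T) = 0" by simp
  moreover have "cv.dim S + cv.dim T \<le> cv.dim (sumsp S T) + cv.dim (S \<inter> T)"
    using grassmann[OF S(1) T(1) fin_ebasis] cvec_span S T by blast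
  ultimately show ?thesis by simp
qed

primrec usum :: "(nat \<Rightarrow> (nat \<Rightarrow> complex) set) \<Rightarrow> nat \<Rightarrow> (nat \<Rightarrow> complex) set" where
  "usum V 0 = {0}"
| "usum V (Suc m) = sumsp (usum V m) (V m)"

lemma orth_family:
  fixes V :: "nat \<Rightarrow> (nat \<Rightarrow> complex) set"
  assumes A: "\<forall>v<k. cv.subspace (V v) \<and> V v \<subseteq> cvec d"
    and O: "\<forall>u<k. \<forall>v<k. u \<noteq> v \<longrightarrow> corth d (V u) (V v)"
  shows "(\<Sum>v<k. cv.dim (V v)) \<le> d"
proof -
  have "m \<le> k \<longrightarrow> cv.subspace (usum V m) \<and> usum V m \<subseteq> cvec d \<and>
     (\<forall>j. m \<le> j \<and> j < k \<longrightarrow> corth d (usum V m) (V j)) \<and>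
     (\<Sum>v<m. cv.dim (V v)) \<le> cv.dim (usum V m)" for m
  proof (induction m)
    case 0
    have "cv.subspace {0}" using cv.subspace_span[of "{}"] by simp
    then show ?case by (auto simp: cvec_def corth_def cinner_def)
  next
    case (Suc m)
    show ?case
    proof
      assume mk: "Suc m \<le> k"
      then have IH: "cv.subspace (usum V m)" "usum V m \<subseteq> cvec d"
          "\<forall>j. m \<le> j \<and> j < k \<longrightarrow> corth d (usum V m) (V j)"
          "(\<Sum>v<m. cv.dim (V v)) \<le> cv.dim (usum V m)" using Suc by auto
      have Vm: "cv.subspace (V m)" "V m \<subseteq> cvec d" using A mk by auto
      have o: "corth d (usum V m) (V m)" using IH(3) mk by auto
      have "cv.subspace (usum V (Suc m))" using sumsp_subspace[OF IH(1) Vm(1)] by simp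
      moreover have "usum V (Suc m) \<subseteq> cvec d" using sumsp_cvec[OF IH(2) Vm(2)] by simp
      moreover have "\<forall>j. Suc m \<le> j \<and> j < k \<longrightarrow> corth d (usum V (Suc m)) (V j)"
        using IH(3) O mk by (auto intro!: corth_sumsp)
      moreover have "(\<Sum>v<Suc m. cv.dim (V v)) \<le> cv.dim (usum V (Suc m))"
        using IH(4) orth_dim[OF IH(1,2) Vm o] by simp
      ultimately show "cv.subspace (usum V (Suc m)) \<and> usum V (Suc m) \<subseteq> cvec d \<and>
         (\<forall>j. Suc m \<le> j \<and> j < k \<longrightarrow> corth d (usum V (Suc m)) (V j)) \<and>
         (\<Sum>v<Suc m. cv.dim (V v)) \<le> cv.dim (usum V (Suc m))" by blast
    qed
  qed
  then have "(\<Sum>v<k. cv.dim (V v)) \<le> cv.dim (usum V k)" "usum V k \<subseteq> cvec d" by auto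
  then show ?thesis using dim_cvec by (meson le_trans)
qed


section \<open>Families on the cycle\<close>

definition fam :: "nat \<Rightarrow> nat \<Rightarrow> nat \<Rightarrow> (nat \<Rightarrow> (nat \<Rightarrow> complex) set) \<Rightarrow> bool" where
  "fam p q d V \<longleftrightarrow> (\<forall>v<p. cv.subspace (V v) \<and> V v \<subseteq> cvec d) \<and>
     (\<forall>u<p. \<forall>v<p. q \<le> cycdist p u v \<longrightarrow> corth d (V u) (V v))"

lemma fam_one: assumes F: "fam p 1 d V" shows "(\<Sum>v<p. cv.dim (V v)) \<le> d"
proof (rule orth_family)
  show "\<forall>v<p. cv.subspace (V v) \<and> V v \<subseteq> cvec d" using F by (simp add: fam_def)
  show "\<forall>u<p. \<forall>v<p. u \<noteq> v \<longrightarrow> corth d (V u) (V v)"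
  proof (intro allI impI)
    fix u v assume "u < p" "v < p" "u \<noteq> v"
    moreover then have "1 \<le> cycdist p u v" by (rule cd_D)
    ultimately show "corth d (V u) (V v)" using F by (simp add: fam_def)
  qed
qed

lemma fam_sub: assumes "fam (2*m) (2*s) d V"
  shows "fam m s d (\<lambda>i. V (2*i))" "fam m s d (\<lambda>i. V (2*i+1))"
proof -
  have A: "\<forall>v<2*m. cv.subspace (V v) \<and> V v \<subseteq> cvec d" and
    O: "\<And>u v. u<2*m \<Longrightarrow> v<2*m \<Longrightarrow> 2*s \<le> cycdist (2*m) u v \<Longrightarrow> corth d (V u) (V v)"
    using assms by (auto simp: fam_def)
  show "fam m s d (\<lambda>i. V (2*i))" unfolding fam_def
    using A by (auto intro!: O cd_C1)
  show "fam m s d (\<lambda>i. V (2*i+1))" unfolding fam_def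
    using A by (auto intro!: O cd_C2[simplified])
qed

lemma sum_split2: fixes m :: nat shows "(\<Sum>v<2*m. f v) = (\<Sum>i<m. f (2*i)) + (\<Sum>i<m. (f (2*i+1)::nat))"
  by (induction m) auto

lemma sum_rot: "(\<Sum>v<p. f (Suc v mod p)) = (\<Sum>v<p. (f v::nat))"
proof (cases p)
  case 0 then show ?thesis by simp
next
  case (Suc k)
  have "(\<Sum>v<Suc k. f (Suc v mod Suc k)) = (\<Sum>v<k. f (Suc v mod Suc k)) + f 0"
    by (simp add: sum.lessThan_Suc)
  also have "(\<Sum>v<k. f (Suc v mod Suc k)) = (\<Sum>v<k. f (Suc v))"
    by (intro sum.cong) auto
  also have "(\<Sum>v<k. f (Suc v)) + f 0 = (\<Sum>v<Suc k. f v)"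
    by (subst sum.lessThan_Suc_shift) simp
  finally show ?thesis using Suc by simp
qed

lemma fam_inter:
  assumes F: "fam p q d V" and q2: "2 \<le> q" and qp: "2*q \<le> p"
  shows "fam p (Suc q) d (\<lambda>v. sumsp (V v) (V (Suc v mod p)))"
    and "fam p (q - 1) d (\<lambda>v. V v \<inter> V (Suc v mod p))"
    and "2 * (\<Sum>v<p. cv.dim (V v)) \<le> (\<Sum>v<p. cv.dim (sumsp (V v) (V (Suc v mod p))))
            + (\<Sum>v<p. cv.dim (V v \<inter> V (Suc v mod p)))"
proof -
  have p0: "0 < p" using q2 qp by simp
  have A: "cv.subspace (V v) \<and> V v \<subseteq> cvec d" if "v < p" for v using F that by (auto simp: fam_def)
  have O: "corth d (V u) (V v)" if "u < p" "v < p" "q \<le> cycdist p u v" for u v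
    using F that unfolding fam_def by blast
  have nx: "Suc v mod p < p" for v using p0 by simp
  have X1: "\<forall>v<p. cv.subspace (sumsp (V v) (V (Suc v mod p))) \<and> sumsp (V v) (V (Suc v mod p)) \<subseteq> cvec d"
  proof (intro allI impI)
    fix v assume "v < p"
    show "cv.subspace (sumsp (V v) (V (Suc v mod p))) \<and> sumsp (V v) (V (Suc v mod p)) \<subseteq> cvec d"
      using sumsp_subspace[OF conjunct1[OF A[OF \<open>v < p\<close>]] conjunct1[OF A[OF nx[of v]]]]
        sumsp_cvec[OF conjunct2[OF A[OF \<open>v < p\<close>]] conjunct2[OF A[OF nx[of v]]]] by (rule conjI)
  qed
  have X2: "\<forall>u<p. \<forall>v<p. Suc q \<le> cycdist p u v \<longrightarrow> corth d (sumsp (V u) (V (Suc u mod p))) (sumsp (V v) (V (Suc v mod p)))"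
  proof (intro allI impI)
    fix u v assume u: "u < p" and v: "v < p" and c: "Suc q \<le> cycdist p u v"
    have c1: "q \<le> cycdist p u v" using c by simp
    have c2: "q \<le> cycdist p u (Suc v mod p)" using cd_A[OF u v c] .
    have "Suc q \<le> cycdist p v u" using c cd_sym[of p u v] by simp
    then have "q \<le> cycdist p v (Suc u mod p)" by (rule cd_A[OF v u])
    then have c3: "q \<le> cycdist p (Suc u mod p) v" using cd_sym[of p v "Suc u mod p"] by simp
    have c4: "q \<le> cycdist p (Suc u mod p) (Suc v mod p)" using cd_shift[OF u v] c1 by simp
    show "corth d (sumsp (V u) (V (Suc u mod p))) (sumsp (V v) (V (Suc v mod p)))"
      by (rule corth_sumsp2[OF O[OF u v c1] O[OF u nx c2] O[OF nx v c3] O[OF nx nx c4]])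
  qed
  show "fam p (Suc q) d (\<lambda>v. sumsp (V v) (V (Suc v mod p)))"
    unfolding fam_def using X1 X2 by blast
  have Y1: "\<forall>v<p. cv.subspace (V v \<inter> V (Suc v mod p)) \<and> V v \<inter> V (Suc v mod p) \<subseteq> cvec d"
  proof (intro allI impI)
    fix v assume "v < p"
    then show "cv.subspace (V v \<inter> V (Suc v mod p)) \<and> V v \<inter> V (Suc v mod p) \<subseteq> cvec d"
      using cv.subspace_inter[OF conjunct1[OF A[OF \<open>v < p\<close>]] conjunct1[OF A[OF nx[of v]]]]
        conjunct2[OF A[OF \<open>v < p\<close>]] by blast
  qed
  have Y2: "\<forall>u<p. \<forall>v<p. q - 1 \<le> cycdist p u v \<longrightarrow> corth d (V u \<inter> V (Suc u mod p)) (V v \<inter> V (Suc v mod p))"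
  proof (intro allI impI)
    fix u v assume u: "u < p" and v: "v < p" and c: "q - 1 \<le> cycdist p u v"
    have "q \<le> Suc (cycdist p u v)" using c by simp
    from cd_B[OF u v qp this]
    show "corth d (V u \<inter> V (Suc u mod p)) (V v \<inter> V (Suc v mod p))"
    proof (elim disjE)
      assume "q \<le> cycdist p u v"
      then show ?thesis by (rule corth_mono[OF O[OF u v]]) auto
    next
      assume "q \<le> cycdist p u (Suc v mod p)"
      then show ?thesis by (rule corth_mono[OF O[OF u nx]]) auto
    next
      assume "q \<le> cycdist p (Suc u mod p) v"
      then show ?thesis by (rule corth_mono[OF O[OF nx v]]) auto
    qed
  qed
  show "fam p (q - 1) d (\<lambda>v. V v \<inter> V (Suc v mod p))"
    unfolding fam_def using Y1 Y2 by blast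
  have "cv.dim (V v) + cv.dim (V (Suc v mod p)) \<le>
      cv.dim (sumsp (V v) (V (Suc v mod p))) + cv.dim (V v \<inter> V (Suc v mod p))" if "v < p" for v
  proof -
    have a1: "cv.subspace (V v)" "V v \<subseteq> cvec d" using A[OF that] by auto
    have a2: "cv.subspace (V (Suc v mod p))" "V (Suc v mod p) \<subseteq> cvec d" using A[OF nx[of v]] by auto
    show ?thesis by (rule grassmann[OF a1(1) a2(1) fin_ebasis subset_trans[OF a1(2) cvec_span]
        subset_trans[OF a2(2) cvec_span]])
  qed
  then have "(\<Sum>v<p. cv.dim (V v) + cv.dim (V (Suc v mod p))) \<le>
      (\<Sum>v<p. cv.dim (sumsp (V v) (V (Suc v mod p))) + cv.dim (V v \<inter> V (Suc v mod p)))"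
    by (intro sum_mono) auto
  then show "2 * (\<Sum>v<p. cv.dim (V v)) \<le> (\<Sum>v<p. cv.dim (sumsp (V v) (V (Suc v mod p))))
            + (\<Sum>v<p. cv.dim (V v \<inter> V (Suc v mod p)))"
    by (simp add: sum.distrib sum_rot[of "\<lambda>v. cv.dim (V v)"])
qed

lemma main: "\<forall>q d V. 1 \<le> q \<longrightarrow> 2*q \<le> 2^n \<longrightarrow> fam (2^n) q d V \<longrightarrow> (\<Sum>v<2^n. cv.dim (V v)) \<le> q*d"
proof (induction n)
  case 0 then show ?case by auto
next
  case (Suc n)
  have even: "(\<Sum>v<2^Suc n. cv.dim (V v)) \<le> 2*s*d"
    if F: "fam (2^Suc n) (2*s) d V" and s1: "1 \<le> s" and sn: "2*s \<le> 2^n" for s d V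
  proof -
    have F': "fam (2*2^n) (2*s) d V" using F by simp
    have a: "(\<Sum>i<2^n. cv.dim (V (2*i))) \<le> s*d"
      using Suc.IH[rule_format, OF s1 sn fam_sub(1)[OF F']] by simp
    have b: "(\<Sum>i<2^n. cv.dim (V (2*i+1))) \<le> s*d"
      using Suc.IH[rule_format, OF s1 sn fam_sub(2)[OF F']] by simp
    have "(\<Sum>v<2^Suc n. cv.dim (V v)) = (\<Sum>i<2^n. cv.dim (V (2*i))) + (\<Sum>i<2^n. cv.dim (V (2*i+1)))"
      using sum_split2[where m="2^n" and f="\<lambda>v. cv.dim (V v)"] by simp
    then show ?thesis using a b by simp
  qed
  show ?case
  proof (intro allI impI)
    fix q d V assume q1: "1 \<le> q" and qp: "2*q \<le> 2^Suc n" and F: "fam (2^Suc n) q d V"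
    have "q = 1 \<or> (even q \<and> 2 \<le> q) \<or> (odd q \<and> 3 \<le> q)" using q1 by presburger
    then consider "q = 1" | "even q" "2 \<le> q" | "odd q" "3 \<le> q" by blast
    then show "(\<Sum>v<2^Suc n. cv.dim (V v)) \<le> q*d"
    proof cases
      case 1 then show ?thesis using fam_one F by simp
    next
      case 2
      then obtain s where s: "q = 2*s" by blast
      have s1: "1 \<le> s" and sn: "2*s \<le> 2^n" using s 2 qp by auto
      have Fs: "fam (2^Suc n) (2*s) d V" using F s by simp
      show ?thesis using even[OF Fs s1 sn] s by simp
    next
      case 3
      then obtain s where s: "q = 2*s+1" using oddE by blast
      have s1: "1 \<le> s" using 3 s by simp
      have n1: "2*s+1 \<le> 2^n" using qp s by simp
      have "n \<noteq> 0" using n1 s1 by (cases n) auto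
      then have ev: "even ((2::nat)^n)" by simp
      have "2*s+1 \<noteq> 2^n"
      proof
        assume "2*s+1 = 2^n"
        then have "even (2*s+1)" using ev by simp
        then show False by simp
      qed
      then have n2: "2*(s+1) \<le> 2^n" using n1 by simp
      have n3: "2*s \<le> 2^n" using n2 by simp
      have q2: "2 \<le> q" using 3 by simp
      have e1: "Suc q = 2*(s+1)" using s by simp
      have e2: "q - 1 = 2*s" using s by simp
      have FX: "fam (2^Suc n) (2*(s+1)) d (\<lambda>v. sumsp (V v) (V (Suc v mod 2^Suc n)))"
        using fam_inter(1)[OF F q2 qp] unfolding e1 .
      have FY: "fam (2^Suc n) (2*s) d (\<lambda>v. V v \<inter> V (Suc v mod 2^Suc n))"
        using fam_inter(2)[OF F q2 qp] unfolding e2 .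
      have X: "(\<Sum>v<2^Suc n. cv.dim (sumsp (V v) (V (Suc v mod 2^Suc n)))) \<le> 2*(s+1)*d"
        using even[OF FX _ n2] by simp
      have Y: "(\<Sum>v<2^Suc n. cv.dim (V v \<inter> V (Suc v mod 2^Suc n))) \<le> 2*s*d"
        using even[OF FY s1 n3] by simp
      have Z: "2 * (\<Sum>v<2^Suc n. cv.dim (V v)) \<le> (\<Sum>v<2^Suc n. cv.dim (sumsp (V v) (V (Suc v mod 2^Suc n))))
            + (\<Sum>v<2^Suc n. cv.dim (V v \<inter> V (Suc v mod 2^Suc n)))"
        using fam_inter(3)[OF F q2 qp] .
      have W: "2*(s+1)*d + 2*s*d = 2*(q*d)" using s by (simp add: algebra_simps)
      show ?thesis using X Y Z W by linarith
    qed
  qed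
qed


section \<open>Upper bound construction\<close>

definition ee :: "nat \<Rightarrow> nat \<Rightarrow> complex" where
  "ee k = (\<lambda>i. if i = k then 1 else 0)"

definition win :: "nat \<Rightarrow> nat \<Rightarrow> nat \<Rightarrow> nat set" where
  "win p q v = (\<lambda>j. (v + j) mod p) ` {..<q}"

lemma inj_ee: "inj ee"
proof (rule injI)
  fix a b assume "ee a = ee b"
  then have "ee a a = ee b a" by simp
  then show "a = b" by (simp add: ee_def split: if_splits)
qed

lemma inj_win: fixes p v :: nat assumes "q \<le> p" "v < p" shows "inj_on (\<lambda>j. (v + j) mod p) {..<q}"
proof (rule inj_onI)
  fix j k assume j: "j \<in> {..<q}" and k: "k \<in> {..<q}" and e: "(v + j) mod p = (v + k) mod p"
  have "v + j < 2*p" "v + k < 2*p" using assms j k by auto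
  then show "j = k" using e j k assms unfolding mod2[OF \<open>v + j < 2*p\<close>] mod2[OF \<open>v + k < 2*p\<close>]
    by (auto split: if_splits)
qed

lemma card_B: assumes "q \<le> p" "v < p" shows "card (ee ` win p q v) = q"
proof -
  have "card (ee ` win p q v) = card (win p q v)"
    using inj_ee by (simp add: card_image inj_on_subset)
  also have "\<dots> = q" unfolding win_def using card_image[OF inj_win[OF assms]] by simp
  finally show ?thesis .
qed

lemma win_lt: "0 < p \<Longrightarrow> k \<in> win p q v \<Longrightarrow> k < p"
  by (auto simp: win_def)

lemma cspan_supp: assumes "finite K" "x \<in> cspan (ee ` K)" "i \<notin> K" shows "x i = 0"
proof -
  obtain c where c: "x = (\<lambda>i. \<Sum>b\<in>ee ` K. c b * b i)" using assms(2) by (auto simp: cspan_def)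
  have "(\<Sum>b\<in>ee ` K. c b * b i) = 0"
    by (rule sum.neutral) (use assms(3) in \<open>auto simp: ee_def\<close>)
  then show ?thesis using c by simp
qed

lemma cindep_ee: assumes "finite K" shows "cindep (ee ` K)"
  unfolding cindep_def
proof (intro allI impI ballI)
  fix c :: "(nat \<Rightarrow> complex) \<Rightarrow> complex" and b
  assume h: "\<forall>i. (\<Sum>b\<in>ee ` K. c b * b i) = 0" and b: "b \<in> ee ` K"
  then obtain k where k: "k \<in> K" "b = ee k" by auto
  have "(\<Sum>b\<in>ee ` K. c b * b k) = (\<Sum>k'\<in>K. c (ee k') * ee k' k)"
    using inj_ee by (simp add: sum.reindex inj_on_subset)
  also have "\<dots> = (\<Sum>k'\<in>K. if k' = k then c (ee k') else 0)"
    by (intro sum.cong) (auto simp: ee_def)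
  also have "\<dots> = c (ee k)" using k(1) assms by simp
  finally show "c b = 0" using h k by simp
qed

lemma construction:
  assumes q1: "1 \<le> q" and qp: "q \<le> p"
  shows "(\<forall>v\<in>{0..<p}. csubspace_dim p q (cspan (ee ` win p q v))) \<and>
     (\<forall>u\<in>{0..<p}. \<forall>v\<in>{0..<p}. u \<noteq> v \<and> \<not> frac_adj p q u v \<longrightarrow>
        corth p (cspan (ee ` win p q u)) (cspan (ee ` win p q v)))"
proof (intro conjI ballI impI)
  have p0: "0 < p" using q1 qp by simp
  fix v assume v: "v \<in> {0..<p}"
  let ?B = "ee ` win p q v"
  have fK: "finite (win p q v)" by (simp add: win_def)
  have fB: "finite ?B" using fK by simp
  have sub: "cspan ?B \<subseteq> cvec p"
  proof
    fix x assume x: "x \<in> cspan ?B"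
    have "x i = 0" if "p \<le> i" for i
      using cspan_supp[OF fK x] win_lt[OF p0, of _ q v] that by (meson not_le)
    then show "x \<in> cvec p" by (simp add: cvec_def)
  qed
  have "?B \<subseteq> cspan ?B" using cspan_eq[OF fB] cv.span_superset by auto
  then show "csubspace_dim p q (cspan ?B)"
    unfolding csubspace_dim_def using sub fB card_B[OF qp] v cindep_ee[OF fK] by auto
next
  fix u v assume u: "u \<in> {0..<p}" and v: "v \<in> {0..<p}" and h: "u \<noteq> v \<and> \<not> frac_adj p q u v"
  have c: "q \<le> cycdist p u v" using h unfolding frac_adj_def by auto
  have disj: "i \<notin> win p q u \<or> i \<notin> win p q v" for i
  proof (rule ccontr)
    assume "\<not> ?thesis"
    then obtain j k where "j < q" "k < q" "i = (u + j) mod p" "i = (v + k) mod p"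
      by (auto simp: win_def)
    then show False using cd_E[of u p v j q k] u v qp c by auto
  qed
  have fKu: "finite (win p q u)" and fKv: "finite (win p q v)" by (simp_all add: win_def)
  show "corth p (cspan (ee ` win p q u)) (cspan (ee ` win p q v))"
    unfolding corth_def cinner_def
  proof (intro ballI)
    fix x y assume x: "x \<in> cspan (ee ` win p q u)" and y: "y \<in> cspan (ee ` win p q v)"
    have z: "x i * cnj (y i) = 0" for i
      using disj[of i] cspan_supp[OF fKu x] cspan_supp[OF fKv y] by auto
    show "(\<Sum>i<p. x i * cnj (y i)) = 0" by (rule sum.neutral) (use z in blast)
  qed
qed

theorem corollary18:
  fixes n q :: nat
  assumes "n \<ge> 1" and "1 \<le> q" and "q \<le> 2 ^ (n - 1)"
  shows "xi_f_bar {0..<2 ^ n} (frac_adj (2 ^ n) q) = real (2 ^ n) / real q"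
proof -
  define p :: nat where "p = 2^n"
  have pn: "(2::nat)^n = 2 * 2^(n-1)" using assms(1) by (cases n) auto
  have qp2: "2*q \<le> p" using assms(3) pn by (simp add: p_def)
  have qp: "q \<le> p" using qp2 by simp
  have q0: "0 < q" using assms(2) by simp
  show ?thesis
    unfolding xi_f_bar_def p_def[symmetric]
  proof (rule cInf_eq_minimum)
    show "real p / real q \<in> {real d / real r |d r. 1 \<le> r \<and>
      (\<exists>W. (\<forall>v\<in>{0..<p}. csubspace_dim d r (W v)) \<and>
           (\<forall>u\<in>{0..<p}. \<forall>v\<in>{0..<p}. u \<noteq> v \<and> \<not> frac_adj p q u v \<longrightarrow> corth d (W u) (W v)))}"
      unfolding mem_Collect_eq
      apply (rule exI[of _ p], rule exI[of _ q], rule conjI[OF refl], rule conjI[OF assms(2)])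
      apply (rule exI[of _ "\<lambda>v. cspan (ee ` win p q v)"])
      using construction[OF assms(2) qp] by blast
  next
    fix x assume "x \<in> {real d / real r |d r. 1 \<le> r \<and>
      (\<exists>W. (\<forall>v\<in>{0..<p}. csubspace_dim d r (W v)) \<and>
           (\<forall>u\<in>{0..<p}. \<forall>v\<in>{0..<p}. u \<noteq> v \<and> \<not> frac_adj p q u v \<longrightarrow> corth d (W u) (W v)))}"
    then obtain d r W where x: "x = real d / real r" and r1: "1 \<le> r"
      and H1: "\<forall>v\<in>{0..<p}. csubspace_dim d r (W v)"
      and H2: "\<forall>u\<in>{0..<p}. \<forall>v\<in>{0..<p}. u \<noteq> v \<and> \<not> frac_adj p q u v \<longrightarrow> corth d (W u) (W v)"
      unfolding mem_Collect_eq by (elim exE conjE) simp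
    have Wv: "cv.subspace (W v) \<and> W v \<subseteq> cvec d \<and> cv.dim (W v) = r" if "v < p" for v
    proof -
      have "csubspace_dim d r (W v)" using H1 that by simp
      then obtain B where B: "W v \<subseteq> cvec d" "finite B" "card B = r" "cindep B" "cspan B = W v"
        by (auto simp: csubspace_dim_def)
      have "W v = cv.span B" using B cspan_eq by simp
      moreover have "cv.independent B" using B cindep_eq by simp
      ultimately show ?thesis using B cv.dim_span_eq_card_independent by simp
    qed
    have F: "fam p q d W"
      unfolding fam_def
    proof (intro conjI allI impI)
      fix v assume "v < p" then show "cv.subspace (W v)" "W v \<subseteq> cvec d" using Wv by auto
    next
      fix u v assume u: "u < p" and v: "v < p" and c: "q \<le> cycdist p u v"
      have "u \<noteq> v" using c q0 by (auto simp: cycdist_def)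
      moreover have "\<not> frac_adj p q u v" using c by (simp add: frac_adj_def)
      ultimately show "corth d (W u) (W v)" using H2 u v by simp
    qed
    have "(\<Sum>v<p. cv.dim (W v)) \<le> q*d"
      using main[rule_format, OF assms(2) qp2[unfolded p_def] F[unfolded p_def]] by (simp add: p_def)
    moreover have "(\<Sum>v<p. cv.dim (W v)) = p*r" using Wv by simp
    ultimately have "p*r \<le> q*d" by simp
    then have "real p * real r \<le> real q * real d" by (metis of_nat_le_iff of_nat_mult)
    then show "real p / real q \<le> x" unfolding x using q0 r1
      by (simp add: field_simps mult.commute)
  qed
qed

end
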